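(* Let $L\in\mathcal{G}(\Sigma_0,T_0)$ be a deterministic guarded language and let $(\mathfrak{s},\mathfrak{t})$ be a guarded language morphism with $\mathfrak{s}:\Sigma_0\to\mathcal{G}(\Sigma_1,T_1)$ and $\mathfrak{t}:T_0\to\mathsf{BA}(T_1)$. If $\mathfrak{s}(p)$ is deterministic for every $p\in\Sigma_0$, then $\mathrm{apply}^{\mathfrak{s}}_{\mathfrak{t}}(L)$ is deterministic.
   Context: For finite $T$, $\Sigma$: $\mathsf{BA}(T)$ are Boolean expressions over $T$; atoms $\mathsf{At}_T=2^T$; $\alpha\le b$ means $b$ holds under the assignment making exactly the tests in $\alpha$ true. Guarded strings: words in $\mathsf{At}_T(\Sigma\mathsf{At}_T)^*$; $\mathcal{G}(\Sigma,T)$ is the set of guarded languages regular over the alphabet $\mathsf{At}_T\cup\Sigma$. A guarded language is deterministic if for all distinct $w,w'$ in it, $w$ is not a proper prefix of $w'$ and the first position where $w,w'$ differ is an atom. $w'\alpha\diamond\alpha x'=w'\alpha x'$. A guarded language morphism is a pair $(\mathfrak{s},\mathfrak{t})$ with $\mathfrak{s}:\Sigma_0\to\mathcal{G}(\Sigma_1,T_1)$ and $\mathfrak{t}:T_0\to\mathsf{BA}(T_1)$. $\beta\in\mathsf{At}_{T_1}$ is $\mathfrak{t}$-consistent with $\alpha\in\mathsf{At}_{T_0}$ if for all $t\in T_0$, $\alpha\le t$ iff $\beta\le\mathfrak{t}(t)$. $\mathrm{apply}_{\mathfrak{t}}(L)$ = set of $\beta_0p_0\beta_1\cdots p_{n-1}\beta_n$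 such that some $\alpha_0p_0\cdots p_{n-1}\alpha_n\in L$ has each $\beta_i$ $\mathfrak{t}$-consistent with $\alpha_i$. For $L$ over $(\Sigma_0,T_1)$, $\mathrm{apply}^{\mathfrak{s}}(L)$ = set of $\alpha_0\diamond w_0\diamond\alpha_1\diamond\cdots\diamond w_{n-1}\diamond\alpha_n$ with $\alpha_0p_0\cdots p_{n-1}\alpha_n\in L$, $w_i\in\mathfrak{s}(p_i)$. $\mathrm{apply}^{\mathfrak{s}}_{\mathfrak{t}}=\mathrm{apply}^{\mathfrak{s}}\circ\mathrm{apply}_{\mathfrak{t}}$. *)

theory Defs
  imports Main "HOL-Library.Sublist"
begin

text \<open>Letters of guarded strings over actions 's and tests 't:
  an atom (a subset of the finite test set, i.e. an element of 2^T) or an action.\<close>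
type_synonym ('s, 't) letter = "'t set + 's"
type_synonym ('s, 't) gword = "('s, 't) letter list"

inductive_set regular :: "'a list set set" where
  reg_empty: "{} \<in> regular"
| reg_eps: "{[]} \<in> regular"
| reg_sym: "{[a]} \<in> regular"
| reg_union: "A \<in> regular \<Longrightarrow> B \<in> regular \<Longrightarrow> A \<union> B \<in> regular"
| reg_conc: "A \<in> regular \<Longrightarrow> B \<in> regular \<Longrightarrow> {u @ v | u v. u \<in> A \<and> v \<in> B} \<in> regular"
| reg_star: "A \<in> regular \<Longrightarrow> {concat us | us. set us \<subseteq> A} \<in> regular"

fun guarded :: "('s, 't) gword \<Rightarrow> bool" where
  "guarded [Inl a] = True"
| "guarded (Inl a # Inr p # rest) = guarded rest"
| "guarded _ = False"

definition GL :: "('s, 't) gword set set" where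
  "GL = {L. (\<forall>w\<in>L. guarded w) \<and> L \<in> regular}"

definition deterministic :: "('s, 't) gword set \<Rightarrow> bool" where
  "deterministic L \<longleftrightarrow> (\<forall>w\<in>L. \<forall>w'\<in>L. w \<noteq> w' \<longrightarrow>
      \<not> strict_prefix w w' \<and>
      (\<exists>i. i < length w \<and> i < length w' \<and> take i w = take i w' \<and> w ! i \<noteq> w' ! i
           \<and> isl (w ! i) \<and> isl (w' ! i)))"

datatype 't bexp = BTrue | BFalse | BTest 't | BNot "'t bexp"
  | BAnd "'t bexp" "'t bexp" | BOr "'t bexp" "'t bexp"

fun sat :: "'t set \<Rightarrow> 't bexp \<Rightarrow> bool" where
  "sat \<alpha> BTrue = True"
| "sat \<alpha> BFalse = False"
| "sat \<alpha> (BTest t) = (t \<in> \<alpha>)"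
| "sat \<alpha> (BNot b) = (\<not> sat \<alpha> b)"
| "sat \<alpha> (BAnd b c) = (sat \<alpha> b \<and> sat \<alpha> c)"
| "sat \<alpha> (BOr b c) = (sat \<alpha> b \<or> sat \<alpha> c)"

definition t_consistent :: "('t0 \<Rightarrow> 't1 bexp) \<Rightarrow> 't1 set \<Rightarrow> 't0 set \<Rightarrow> bool" where
  "t_consistent tm \<beta> \<alpha> \<longleftrightarrow> (\<forall>t. sat \<alpha> (BTest t) \<longleftrightarrow> sat \<beta> (tm t))"

fun letter_rel :: "('t0 \<Rightarrow> 't1 bexp) \<Rightarrow> ('s, 't0) letter \<Rightarrow> ('s, 't1) letter \<Rightarrow> bool" where
  "letter_rel tm (Inl \<alpha>) (Inl \<beta>) = t_consistent tm \<beta> \<alpha>"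
| "letter_rel tm (Inr p) (Inr q) = (p = q)"
| "letter_rel tm _ _ = False"

definition apply_t :: "('t0 \<Rightarrow> 't1 bexp) \<Rightarrow> ('s, 't0) gword set \<Rightarrow> ('s, 't1) gword set" where
  "apply_t tm L = {w'. \<exists>w\<in>L. list_all2 (letter_rel tm) w w'}"

text \<open>All strings alpha_0 <> w_0 <> alpha_1 <> ... <> alpha_n obtainable from one guarded string,
  where u alpha <> alpha v = u alpha v (defined only when the atoms match).\<close>
fun expand :: "('s0 \<Rightarrow> ('s1, 't) gword set) \<Rightarrow> ('s0, 't) gword \<Rightarrow> ('s1, 't) gword set" where
  "expand sm [Inl a] = {[Inl a]}"
| "expand sm (Inl a # Inr p # rest) =
     {w @ tl v | w v. w \<in> sm p \<and> w \<noteq> [] \<and> hd w = Inl a \<and>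
                      v \<in> expand sm rest \<and> v \<noteq> [] \<and> last w = hd v}"
| "expand sm _ = {}"

definition apply_s :: "('s0 \<Rightarrow> ('s1, 't) gword set) \<Rightarrow> ('s0, 't) gword set \<Rightarrow> ('s1, 't) gword set" where
  "apply_s sm L = (\<Union>w\<in>L. expand sm w)"

definition apply_st :: "('s0 \<Rightarrow> ('s1, 't1) gword set) \<Rightarrow> ('t0 \<Rightarrow> 't1 bexp)
    \<Rightarrow> ('s0, 't0) gword set \<Rightarrow> ('s1, 't1) gword set" where
  "apply_st sm tm L = apply_s sm (apply_t tm L)"

end

theory Submission
  imports Defs
begin

definition AD :: "('a + 'b) list \<Rightarrow> ('a + 'b) list \<Rightarrow> bool" where
  "AD x y \<longleftrightarrow> (\<exists>i. i < length x \<and> i < length y \<and> take i x = take i y \<and> x ! i \<noteq> y ! i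
           \<and> isl (x ! i) \<and> isl (y ! i))"

lemma AD_not_prefix:
  assumes "AD x y" shows "\<not> strict_prefix x y"
proof
  assume "strict_prefix x y"
  then obtain z where "y = x @ z" by (auto simp: strict_prefix_def prefix_def)
  with assms show False by (auto simp: AD_def nth_append)
qed

lemma det_iff: "deterministic L \<longleftrightarrow> (\<forall>w\<in>L. \<forall>w'\<in>L. w \<noteq> w' \<longrightarrow> AD w w')"
  unfolding deterministic_def using AD_not_prefix by (auto simp: AD_def) blast+

lemma AD_hd: "a \<noteq> b \<Longrightarrow> isl a \<Longrightarrow> isl b \<Longrightarrow> AD (a#x) (b#y)"
  unfolding AD_def by (rule exI[of _ 0]) auto

lemma AD_Cons: "AD (a#x) (a#y) \<longleftrightarrow> AD x y"
proof
  assume "AD (a#x) (a#y)"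
  then obtain i where i: "i < length (a#x)" "i < length (a#y)" "take i (a#x) = take i (a#y)"
    "(a#x) ! i \<noteq> (a#y) ! i" "isl ((a#x) ! i)" "isl ((a#y) ! i)" unfolding AD_def by blast
  have "i \<noteq> 0" proof
    assume "i = 0" with i(4) show False by simp
  qed
  then obtain j where "i = Suc j" by (cases i) auto
  with i show "AD x y" unfolding AD_def by (intro exI[of _ j]) auto
next
  assume "AD x y"
  then obtain i where i: "i < length x" "i < length y" "take i x = take i y"
    "x ! i \<noteq> y ! i" "isl (x ! i)" "isl (y ! i)" unfolding AD_def by blast
  then show "AD (a#x) (a#y)" unfolding AD_def by (intro exI[of _ "Suc i"]) auto
qed

lemma AD_prepend: "AD x y \<Longrightarrow> AD (z@x) (z@y)"
  by (induction z) (auto simp: AD_Cons)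

lemma AD_append: "AD x y \<Longrightarrow> AD (x@s) (y@t)"
  unfolding AD_def by (auto simp: nth_append)

lemma AD_len0: "AD [] y \<Longrightarrow> False" "AD x [] \<Longrightarrow> False"
  unfolding AD_def by auto

lemma AD_Cons_neq: "AD (a#x) (b#y) \<Longrightarrow> a \<noteq> b \<Longrightarrow> isl a \<and> isl b"
proof -
  assume "AD (a#x) (b#y)" "a \<noteq> b"
  then obtain i where i: "take i (a#x) = take i (b#y)"
    "isl ((a#x) ! i)" "isl ((b#y) ! i)" unfolding AD_def by blast
  have "i = 0" proof (rule ccontr)
    assume "i \<noteq> 0" then obtain j where "i = Suc j" by (cases i) auto
    with i(1) \<open>a \<noteq> b\<close> show False by simp
  qed
  with i show ?thesis by simp
qed

lemma tcons_unique: "t_consistent tm \<beta> \<alpha> \<Longrightarrow> t_consistent tm \<beta> \<alpha>' \<Longrightarrow> \<alpha> = \<alpha>'"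
  unfolding t_consistent_def by auto

lemma letter_rel_inr: "letter_rel tm a (Inr p) \<longleftrightarrow> a = Inr p"
  by (cases a) auto

lemma letter_rel_inr2: "letter_rel tm (Inr p) b \<longleftrightarrow> b = Inr p"
  by (cases b) auto

lemma letter_rel_isl: "letter_rel tm a b \<Longrightarrow> isl a = isl b"
  by (cases a; cases b) auto

lemma letter_rel_unique: "letter_rel tm a b \<Longrightarrow> letter_rel tm a' b \<Longrightarrow> a = a'"
  by (cases a; cases a'; cases b) (auto dest: tcons_unique)

lemma apply_t_AD:
  "list_all2 (letter_rel tm) u w \<Longrightarrow> list_all2 (letter_rel tm) u' w' \<Longrightarrow>
   u = u' \<or> AD u u' \<Longrightarrow> w \<noteq> w' \<Longrightarrow> AD w w'"
proof (induction u arbitrary: w u' w')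
  case Nil
  then show ?case by (auto dest: AD_len0)
next
  case (Cons a us)
  obtain b ws where w: "w = b # ws" "letter_rel tm a b" "list_all2 (letter_rel tm) us ws"
    using Cons.prems(1) by (cases w) auto
  have pr: "a # us = u' \<or> AD (a # us) u'" "w \<noteq> w'" "list_all2 (letter_rel tm) u' w'"
    using Cons.prems by auto
  note IH = Cons.IH
  show ?case
  proof (cases u')
    case Nil
    then show ?thesis using pr by (auto dest: AD_len0)
  next
    case (Cons a' us')
    obtain b' ws' where w': "w' = b' # ws'" "letter_rel tm a' b'" "list_all2 (letter_rel tm) us' ws'"
      using Cons pr(3) by (cases w') auto
    show ?thesis
    proof (cases "b = b'")
      case True
      then have aa: "a = a'" using letter_rel_unique[OF w(2)] w'(2) by simp
      then have "us = us' \<or> AD us us'" using Cons pr(1) AD_Cons by auto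
      moreover have "ws \<noteq> ws'" using True w w' pr(2) by auto
      ultimately have "AD ws ws'" using IH w(3) w'(3) by blast
      then show ?thesis using True w w' AD_Cons by auto
    next
      case False
      have "isl b"
      proof (rule ccontr)
        assume nb: "\<not> isl b"
        then obtain p where bp: "b = Inr p" using nb by (cases b) simp_all
        then have ap: "a = Inr p" using w(2) by (simp add: letter_rel_inr)
        then have "\<not> isl a" by simp
        have "a \<noteq> a'" proof
          assume "a = a'" then have "b' = Inr p" using w'(2) ap letter_rel_inr2[of tm p b'] by simp
          then show False using bp False by simp
        qed
        then have "AD (a#us) (a'#us')" using Cons pr(1) by auto
        then have "isl a" using AD_Cons_neq \<open>a \<noteq> a'\<close> by blast
        then show False using \<open>\<not> isl a\<close> by simp
      qed
      have "isl b'"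
      proof (rule ccontr)
        assume nb: "\<not> isl b'"
        then obtain p where bp: "b' = Inr p" using nb by (cases b') simp_all
        then have ap: "a' = Inr p" using w'(2) by (simp add: letter_rel_inr)
        then have "\<not> isl a'" by simp
        have "a \<noteq> a'" proof
          assume "a = a'" then have "b = Inr p" using w(2) ap letter_rel_inr2[of tm p b] by simp
          then show False using bp False by simp
        qed
        then have "AD (a#us) (a'#us')" using Cons pr(1) by auto
        then have "isl a'" using AD_Cons_neq \<open>a \<noteq> a'\<close> by blast
        then show False using \<open>\<not> isl a'\<close> by simp
      qed
      then show ?thesis using False \<open>isl b\<close> w w' AD_hd by auto
    qed
  qed
qed

lemma expand_shape:
  "x \<in> expand sm u \<Longrightarrow> (\<exists>a. u = [Inl a] \<and> x = [Inl a]) \<or>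
    (\<exists>a p r w v. u = Inl a # Inr p # r \<and> x = w @ tl v \<and> w \<in> sm p \<and> w \<noteq> [] \<and>
       hd w = Inl a \<and> v \<in> expand sm r \<and> v \<noteq> [] \<and> last w = hd v)"
  by (cases "(sm, u)" rule: expand.cases) auto

lemma expand_hd:
  assumes "x \<in> expand sm u" shows "\<exists>a us xs. u = Inl a # us \<and> x = Inl a # xs"
  using expand_shape[OF assms]
proof
  assume "\<exists>a. u = [Inl a] \<and> x = [Inl a]" then show ?thesis by auto
next
  assume "\<exists>a p r w v. u = Inl a # Inr p # r \<and> x = w @ tl v \<and> w \<in> sm p \<and> w \<noteq> [] \<and>
       hd w = Inl a \<and> v \<in> expand sm r \<and> v \<noteq> [] \<and> last w = hd v"
  then obtain a p r w v where h: "u = Inl a # Inr p # r" "x = w @ tl v" "w \<noteq> []" "hd w = Inl a"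
    by blast
  then obtain ws where "w = Inl a # ws" by (cases w) auto
  with h show ?thesis by auto
qed

lemma expand_AD:
  shows "u = u' \<or> AD u u' \<Longrightarrow> x \<in> expand sm u \<Longrightarrow> x' \<in> expand sm u' \<Longrightarrow> x \<noteq> x' \<Longrightarrow>
    \<forall>p. deterministic (sm p) \<Longrightarrow> AD x x'"
proof (induction sm u arbitrary: u' x x' rule: expand.induct)
  case (1 sm a)
  then have x: "x = [Inl a]" by simp
  obtain a' us' xs' where u': "u' = Inl a' # us'" "x' = Inl a' # xs'"
    using expand_hd[OF "1.prems"(3)] by blast
  show ?case
  proof (cases "a = a'")
    case False
    then show ?thesis using x u' AD_hd[of "Inl a" "Inl a'"] by simp
  next
    case True
    have "[Inl a] \<noteq> u'" using "1.prems" x by auto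
    then have "AD [Inl a] u'" using "1.prems"(1) by auto
    then have "AD [] us'" using True u' AD_Cons by auto
    then show ?thesis using AD_len0 by blast
  qed
next
  case (2 sm a p rest)
  have "\<exists>w v. x = w @ tl v \<and> w \<in> sm p \<and> w \<noteq> [] \<and> hd w = Inl a \<and>
    v \<in> expand sm rest \<and> v \<noteq> [] \<and> last w = hd v"
    using "2.prems"(2) by (simp only: expand.simps(2) mem_Collect_eq)
  then obtain w v where xw: "x = w @ tl v" "w \<in> sm p" "w \<noteq> []" "hd w = Inl a"
    "v \<in> expand sm rest" "v \<noteq> []" "last w = hd v" by blast
  obtain a' us' xs' where u': "u' = Inl a' # us'" "x' = Inl a' # xs'"
    using expand_hd[OF "2.prems"(3)] by blast
  obtain xs where xs: "x = Inl a # xs"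
    using expand_hd[OF "2.prems"(2)] by auto
  show ?case
  proof (cases "a = a'")
    case False
    then show ?thesis using xs u' AD_hd[of "Inl a" "Inl a'"] by simp
  next
    case True
    note aa = True
    show ?thesis
    using expand_shape[OF "2.prems"(3)]
    proof
      assume "\<exists>a. u' = [Inl a] \<and> x' = [Inl a]"
      then have "u' = [Inl a]" using u' True by auto
      then have "AD (Inl a # Inr p # rest) [Inl a]" using "2.prems"(1) by auto
      then have "AD (Inr p # rest) []" by (simp add: AD_Cons)
      then show ?thesis using AD_len0 by blast
    next
      assume "\<exists>a p r w v. u' = Inl a # Inr p # r \<and> x' = w @ tl v \<and> w \<in> sm p \<and> w \<noteq> [] \<and>
       hd w = Inl a \<and> v \<in> expand sm r \<and> v \<noteq> [] \<and> last w = hd v"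
      then obtain a2 p' r' w' v' where xw': "u' = Inl a2 # Inr p' # r'" "x' = w' @ tl v'" "w' \<in> sm p'"
        "w' \<noteq> []" "hd w' = Inl a2" "v' \<in> expand sm r'" "v' \<noteq> []" "last w' = hd v'"
        by blast
      have a2: "a2 = a" using xw'(1) u'(1) aa by simp
      have pp: "p' = p"
      proof (rule ccontr)
        assume np: "p' \<noteq> p"
        then have "AD (Inl a # Inr p # rest) (Inl a # Inr p' # r')" using "2.prems"(1) xw'(1) a2 by auto
        then have "AD (Inr p # rest) (Inr p' # r')" by (simp add: AD_Cons)
        from AD_Cons_neq[OF this] np show False by simp
      qed
      have rr: "rest = r' \<or> AD rest r'" using "2.prems"(1) xw'(1) a2 pp by (auto simp: AD_Cons)
      show ?thesis
      proof (cases "w = w'")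
        case False
        have D: "\<forall>w\<in>sm p. \<forall>w'\<in>sm p. w \<noteq> w' \<longrightarrow> AD w w'"
          using "2.prems"(5) det_iff[of "sm p"] by blast
        have "w' \<in> sm p" using xw'(3) pp by simp
        then have "AD w w'" using bspec[OF bspec[OF D xw(2)] \<open>w' \<in> sm p\<close>] False by simp
        then have "AD (w @ tl v) (w' @ tl v')" by (rule AD_append)
        then show ?thesis using xw(1) xw'(2) by simp
      next
        case True
        then have "v \<noteq> v'" using xw(1) xw'(2) "2.prems"(4) by auto
        then have "AD v v'" using "2.IH"[OF rr xw(5)] xw'(6) pp "2.prems"(5) by blast
        moreover obtain h tv where "v = h # tv" using xw(6) by (cases v) auto
        moreover obtain h' tv' where "v' = h' # tv'" using xw'(7) by (cases v') auto
        moreover have "hd v = hd v'" using True xw(7) xw'(8) by simp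
        ultimately have "AD tv tv'" by (simp add: AD_Cons)
        then have "AD (w @ tv) (w @ tv')" by (rule AD_prepend)
        then show ?thesis using xw(1) xw'(2) True \<open>v = h # tv\<close> \<open>v' = h' # tv'\<close> by simp
      qed
    qed
  qed
next
  case ("3_1" sm)
  then show ?case by simp
qed (simp_all)

theorem proposition5p4:
  fixes L :: "('s0::finite, 't0::finite) gword set"
    and sm :: "'s0 \<Rightarrow> ('s1::finite, 't1::finite) gword set"
    and tm :: "'t0 \<Rightarrow> 't1 bexp"
  assumes "L \<in> GL" and "deterministic L"
    and "\<And>p. sm p \<in> GL"
    and "\<And>p. deterministic (sm p)"
  shows "deterministic (apply_st sm tm L)"
proof -
  have dt: "deterministic (apply_t tm L)"
    unfolding det_iff
  proof (intro ballI impI)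
    fix w w' assume "w \<in> apply_t tm L" "w' \<in> apply_t tm L" "w \<noteq> w'"
    then obtain u u' where "u \<in> L" "u' \<in> L" "list_all2 (letter_rel tm) u w"
      "list_all2 (letter_rel tm) u' w'" unfolding apply_t_def mem_Collect_eq by blast
    moreover have "u = u' \<or> AD u u'" using assms(2) \<open>u \<in> L\<close> \<open>u' \<in> L\<close> unfolding det_iff by blast
    ultimately show "AD w w'" using apply_t_AD[of tm u w u' w'] \<open>w \<noteq> w'\<close> by simp
  qed
  show ?thesis
    unfolding det_iff apply_st_def
  proof (intro ballI impI)
    fix x x' assume "x \<in> apply_s sm (apply_t tm L)" "x' \<in> apply_s sm (apply_t tm L)" "x \<noteq> x'"
    then obtain u u' where "u \<in> apply_t tm L" "u' \<in> apply_t tm L" "x \<in> expand sm u"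
      "x' \<in> expand sm u'" unfolding apply_s_def UN_iff by blast
    moreover have "u = u' \<or> AD u u'" using dt \<open>u \<in> apply_t tm L\<close> \<open>u' \<in> apply_t tm L\<close>
      unfolding det_iff by blast
    ultimately show "AD x x'" using expand_AD[where u=u and u'=u' and x=x and x'=x' and sm=sm] assms(4) \<open>x \<noteq> x'\<close> by simp
  qed
qed

end
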